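(* Let $p$ be the transition density of a subordinator as described in the context, and let $q\colon\mathbb{R}\to[0,\infty]$ be measurable. Assume that for some $s<t$ and some $M<\infty$, for all $x\in\mathbb{R}$, $$\int_s^t\int_{\mathbb{R}}p(s,x,u,z)q(z)\,dz\,du\le M.$$ Then $q\in L^1_{loc}(\mathbb{R})$.
   Context: A subordinator is a nondecreasing Lévy process on $\mathbb{R}$. We assume its distribution at each time $t>0$ has a density $p_t$ with respect to Lebesgue measure, and set $p(s,x,t,y)=p_{t-s}(y-x)$ for $s<t$; $p$ is space-time homogeneous, $p(s,x,t,y)=0$ whenever $t\le s$ or $y\le x$, and $p(s,x,t,y)>0$ otherwise. *)

theory Defs
  imports "HOL-Probability.Probability"
begin

definition subordinator :: "'a measure \<Rightarrow> (real \<Rightarrow> 'a \<Rightarrow> real) \<Rightarrow> bool" where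
  "subordinator M X \<longleftrightarrow>
     prob_space M \<and>
     (\<forall>t\<ge>0. X t \<in> borel_measurable M) \<and>
     (\<forall>\<omega>\<in>space M. X 0 \<omega> = 0) \<and>
     (\<forall>\<omega>\<in>space M. \<forall>s t. 0 \<le> s \<longrightarrow> s \<le> t \<longrightarrow> X s \<omega> \<le> X t \<omega>) \<and>
     \<comment> \<open>independent increments\<close>
     (\<forall>(ts :: nat \<Rightarrow> real) n. 0 \<le> ts 0 \<longrightarrow> (\<forall>i<n. ts i < ts (Suc i)) \<longrightarrow>
        prob_space.indep_vars M (\<lambda>_. borel) (\<lambda>i \<omega>. X (ts (Suc i)) \<omega> - X (ts i) \<omega>) {..<n}) \<and>
     \<comment> \<open>stationary increments\<close>
     (\<forall>s t. 0 \<le> s \<longrightarrow> s \<le> t \<longrightarrow>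
        distr M borel (\<lambda>\<omega>. X t \<omega> - X s \<omega>) = distr M borel (X (t - s))) \<and>
     \<comment> \<open>stochastic continuity\<close>
     (\<forall>t\<ge>0. \<forall>\<epsilon>>0. ((\<lambda>u. measure M {\<omega>\<in>space M. \<bar>X u \<omega> - X t \<omega>\<bar> > \<epsilon>})
        \<longlongrightarrow> 0) (at t within {0..}))"

definition subordinator_density :: "'a measure \<Rightarrow> (real \<Rightarrow> 'a \<Rightarrow> real) \<Rightarrow> (real \<Rightarrow> real \<Rightarrow> real) \<Rightarrow> bool" where
  "subordinator_density M X pt \<longleftrightarrow>
     subordinator M X \<and>
     (\<lambda>(t, y). pt t y) \<in> borel_measurable (borel :: (real \<times> real) measure) \<and>
     (\<forall>t>0. distributed M lborel (X t) (\<lambda>y. ennreal (pt t y))) \<and>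
     (\<forall>t>0. \<forall>y. y > 0 \<longrightarrow> pt t y > 0) \<and>
     (\<forall>t>0. \<forall>y. y \<le> 0 \<longrightarrow> pt t y = 0)"

definition trans_dens :: "(real \<Rightarrow> real \<Rightarrow> real) \<Rightarrow> real \<Rightarrow> real \<Rightarrow> real \<Rightarrow> real \<Rightarrow> real" where
  "trans_dens pt s x t y = (if s < t then pt (t - s) (y - x) else 0)"

definition locally_integrable_nn :: "(real \<Rightarrow> ennreal) \<Rightarrow> bool" where
  "locally_integrable_nn q \<longleftrightarrow> (\<forall>K. compact K \<longrightarrow> (\<integral>\<^sup>+ z. q z * indicator K z \<partial>lborel) < \<infinity>)"

end

theory Submission imports Defs begin

lemma pt_meas:
  assumes P: "(\<lambda>(t, y). pt t y) \<in> borel_measurable (borel :: (real \<times> real) measure)"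
    and f: "f \<in> borel_measurable N" and g: "g \<in> borel_measurable N"
  shows "(\<lambda>w. pt (f w) (g w) :: real) \<in> borel_measurable N"
proof -
  have "(\<lambda>w. (f w, g w)) \<in> borel_measurable N" using f g by measurable
  from measurable_compose[OF this P] show ?thesis by simp
qed

lemma q_meas:
  assumes "q \<in> borel_measurable (borel::real measure)" "f \<in> borel_measurable N"
  shows "(\<lambda>w. q (f w) :: ennreal) \<in> borel_measurable N"
  using measurable_compose[OF assms(2) assms(1)] by simp

lemma pos_int:
  fixes f :: "real \<Rightarrow> ennreal"
  assumes [measurable]: "f \<in> borel_measurable borel" and "l < r"
    and pos: "\<And>x. x \<in> {l<..<r} \<Longrightarrow> f x > 0"
  shows "(\<integral>\<^sup>+x. f x \<partial>lborel) > 0"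
proof (rule ccontr)
  assume "\<not> ?thesis"
  then have "(\<integral>\<^sup>+x. f x \<partial>lborel) = 0" by simp
  moreover have fm: "f \<in> borel_measurable lborel" unfolding measurable_lborel2 by (rule assms(1))
  ultimately have "AE x in lborel. f x = 0" using nn_integral_0_iff_AE[OF fm] by blast
  then have "AE x in lborel. x \<notin> {l<..<r}"
    by (rule AE_mp) (intro AE_I2 impI, metis pos less_irrefl)
  then obtain N where N: "{x \<in> space lborel. \<not> x \<notin> {l<..<r}} \<subseteq> N" "emeasure lborel N = 0" "N \<in> sets lborel"
    by (rule AE_E)
  have "emeasure lborel {l<..<r} \<le> emeasure lborel N"
    by (rule emeasure_mono) (use N in auto)
  then have "emeasure lborel {l<..<r} = 0" using N by simp
  then show False using \<open>l < r\<close> by simp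
qed

theorem lemma3p2:
  fixes M :: "'a measure" and X :: "real \<Rightarrow> 'a \<Rightarrow> real" and pt :: "real \<Rightarrow> real \<Rightarrow> real"
    and q :: "real \<Rightarrow> ennreal" and s t :: real and C :: ennreal
  assumes "subordinator_density M X pt"
    and "q \<in> borel_measurable borel"
    and "s < t" and "C < \<infinity>"
    and "\<forall>x. (\<integral>\<^sup>+ u. (\<integral>\<^sup>+ z. ennreal (trans_dens pt s x u z) * q z \<partial>lborel)
                  * indicator {s..t} u \<partial>lborel) \<le> C"
  shows "locally_integrable_nn q"
proof -
  have P: "(\<lambda>(t, y). pt t y) \<in> borel_measurable (borel :: (real \<times> real) measure)"
    and ppos: "\<And>r y. r > 0 \<Longrightarrow> y > 0 \<Longrightarrow> pt r y > 0"
    using assms(1) unfolding subordinator_density_def by blast+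
  note [measurable] = pt_meas[OF P] q_meas[OF assms(2)]
  have tdm[measurable]: "(\<lambda>w. trans_dens pt s (f w) (g w) (h w)) \<in> borel_measurable N"
    if [measurable]: "f \<in> borel_measurable N" "g \<in> borel_measurable N" "h \<in> borel_measurable N"
    for f g h and N :: "'b measure"
    unfolding trans_dens_def by measurable
  show ?thesis unfolding locally_integrable_nn_def
  proof (intro allI impI)
    fix K :: "real set" assume "compact K"
    then have [measurable]: "K \<in> sets borel"
      by (rule borel_compact)
    from \<open>compact K\<close> obtain c d where Kcd: "K \<subseteq> {c..d}"
    proof -
      obtain e where "\<forall>x\<in>K. \<bar>x\<bar> \<le> e"
        using compact_imp_bounded[OF \<open>compact K\<close>] unfolding bounded_real by blast
      then have "K \<subseteq> {-e..e}" by (force simp: abs_le_iff)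
      then show ?thesis by (rule that)
    qed
    define a where "a = c - 1"
    define b where "b = d"
    define F where "F = (\<lambda>z. \<integral>\<^sup>+x. indicator {a..b} x * (\<integral>\<^sup>+u. indicator {s..t} u
        * ennreal (trans_dens pt s x u z) \<partial>lborel) \<partial>lborel)"
    define G where "G = (\<lambda>y. \<integral>\<^sup>+u. indicator {s..t} u * ennreal (trans_dens pt s 0 u y) \<partial>lborel)"
    define c0 where "c0 = (\<integral>\<^sup>+y. indicator {0..1} y * G y \<partial>lborel)"
    have Gpos: "G y > 0" if "y > 0" for y
      unfolding G_def
      apply (rule pos_int[where l=s and r=t])
      subgoal by measurable
      subgoal by (rule \<open>s<t\<close>)
      subgoal for u using that ppos[of "u - s" y] by (auto simp: trans_dens_def)
      done
    have c0pos: "c0 > 0"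
      unfolding c0_def
      apply (rule pos_int[where l=0 and r=1])
      subgoal unfolding G_def by measurable
      subgoal by simp
      subgoal for y using Gpos[of y] by auto
      done
    have Flow: "c0 \<le> F z" if "z \<in> K" for z
    proof -
      have Hm: "(\<lambda>x. indicator {a..b} x * (\<integral>\<^sup>+u. indicator {s..t} u
        * ennreal (trans_dens pt s x u z) \<partial>lborel)) \<in> borel_measurable borel"
        by measurable
      have "F z = (\<integral>\<^sup>+y. indicator {a..b} (z + -1 * y) * (\<integral>\<^sup>+u. indicator {s..t} u
        * ennreal (trans_dens pt s (z + -1 * y) u z) \<partial>lborel) \<partial>lborel)"
        unfolding F_def using nn_integral_real_affine[OF Hm, of "-1" z] by simp
      also have "\<dots> = (\<integral>\<^sup>+y. indicator {a..b} (z - y) * G y \<partial>lborel)"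
      proof -
        have td: "trans_dens pt s (z - y) u z = trans_dens pt s 0 u y" for u y
          unfolding trans_dens_def by simp
        have zy: "z + -1 * y = z - y" for y :: real by simp
        show ?thesis unfolding G_def zy td ..
      qed
      also have "\<dots> \<ge> c0" unfolding c0_def
        using Kcd that by (intro nn_integral_mono) (auto simp: a_def b_def indicator_def)
      finally show ?thesis .
    qed
    define h where "h = (\<lambda>x u z. indicator {a..b} x * indicator {s..t} u
        * ennreal (trans_dens pt s x u z) * q z :: ennreal)"
    have hm[measurable]: "(\<lambda>w. h (f w) (g w) (k w)) \<in> borel_measurable N"
      if [measurable]: "f \<in> borel_measurable N" "g \<in> borel_measurable N" "k \<in> borel_measurable N"
      for f g k and N :: "'b measure"
      unfolding h_def by measurable
    have S1: "q z * F z = (\<integral>\<^sup>+x. \<integral>\<^sup>+u. h x u z \<partial>lborel \<partial>lborel)" for z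
    proof -
      have m1: "(\<lambda>u. indicator {s..t} u * ennreal (trans_dens pt s x u z)) \<in> borel_measurable lborel" for x
        by measurable
      have m2: "(\<lambda>x. indicator {a..b} x * (\<integral>\<^sup>+u. indicator {s..t} u
        * ennreal (trans_dens pt s x u z) \<partial>lborel)) \<in> borel_measurable lborel"
        by measurable
      have "q z * F z = (\<integral>\<^sup>+x. q z * (indicator {a..b} x * (\<integral>\<^sup>+u. indicator {s..t} u
        * ennreal (trans_dens pt s x u z) \<partial>lborel)) \<partial>lborel)"
        unfolding F_def by (rule nn_integral_cmult[OF m2, symmetric])
      also have "\<dots> = (\<integral>\<^sup>+x. \<integral>\<^sup>+u. h x u z \<partial>lborel \<partial>lborel)"
      proof (rule nn_integral_cong)
        fix x
        have "q z * (indicator {a..b} x * (\<integral>\<^sup>+u. indicator {s..t} u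
          * ennreal (trans_dens pt s x u z) \<partial>lborel)) = (q z * indicator {a..b} x) * (\<integral>\<^sup>+u. indicator {s..t} u
          * ennreal (trans_dens pt s x u z) \<partial>lborel)"
          by (rule mult.assoc[symmetric])
        also have "\<dots> = (\<integral>\<^sup>+u. (q z * indicator {a..b} x) * (indicator {s..t} u
          * ennreal (trans_dens pt s x u z)) \<partial>lborel)"
          by (rule nn_integral_cmult[OF m1, symmetric])
        also have "\<dots> = (\<integral>\<^sup>+u. h x u z \<partial>lborel)"
          by (rule nn_integral_cong) (simp add: h_def mult_ac)
        finally show "q z * (indicator {a..b} x * (\<integral>\<^sup>+u. indicator {s..t} u
          * ennreal (trans_dens pt s x u z) \<partial>lborel)) = (\<integral>\<^sup>+u. h x u z \<partial>lborel)" .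
      qed
      finally show ?thesis .
    qed
    have S4: "(\<integral>\<^sup>+u. \<integral>\<^sup>+z. h x u z \<partial>lborel \<partial>lborel) = indicator {a..b} x * (\<integral>\<^sup>+ u. (\<integral>\<^sup>+ z. ennreal (trans_dens pt s x u z) * q z \<partial>lborel)
                  * indicator {s..t} u \<partial>lborel)" for x
    proof -
      have m3: "(\<lambda>z. ennreal (trans_dens pt s x u z) * q z) \<in> borel_measurable lborel" for u
        by measurable
      have m4: "(\<lambda>u. (\<integral>\<^sup>+ z. ennreal (trans_dens pt s x u z) * q z \<partial>lborel)
                  * indicator {s..t} u) \<in> borel_measurable lborel"
        by measurable
      have "(\<integral>\<^sup>+u. \<integral>\<^sup>+z. h x u z \<partial>lborel \<partial>lborel) = (\<integral>\<^sup>+u. indicator {a..b} x * ((\<integral>\<^sup>+ z. ennreal (trans_dens pt s x u z) * q z \<partial>lborel)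
                  * indicator {s..t} u) \<partial>lborel)"
      proof (rule nn_integral_cong)
        fix u
        have "(\<integral>\<^sup>+z. h x u z \<partial>lborel) = (\<integral>\<^sup>+z. (indicator {a..b} x * indicator {s..t} u) * (ennreal (trans_dens pt s x u z) * q z) \<partial>lborel)"
          by (rule nn_integral_cong) (simp add: h_def mult_ac)
        also have "\<dots> = (indicator {a..b} x * indicator {s..t} u) * (\<integral>\<^sup>+ z. ennreal (trans_dens pt s x u z) * q z \<partial>lborel)"
          by (rule nn_integral_cmult[OF m3])
        finally show "(\<integral>\<^sup>+z. h x u z \<partial>lborel) = indicator {a..b} x * ((\<integral>\<^sup>+ z. ennreal (trans_dens pt s x u z) * q z \<partial>lborel)
                  * indicator {s..t} u)" by (simp add: mult_ac)
      qed
      also have "\<dots> = indicator {a..b} x * (\<integral>\<^sup>+ u. (\<integral>\<^sup>+ z. ennreal (trans_dens pt s x u z) * q z \<partial>lborel)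
                  * indicator {s..t} u \<partial>lborel)"
        by (rule nn_integral_cmult[OF m4])
      finally show ?thesis .
    qed
    have main: "(\<integral>\<^sup>+z. q z * F z \<partial>lborel) < \<infinity>"
    proof -
      have "(\<integral>\<^sup>+z. q z * F z \<partial>lborel) = (\<integral>\<^sup>+z. \<integral>\<^sup>+x. \<integral>\<^sup>+u. h x u z \<partial>lborel \<partial>lborel \<partial>lborel)"
        by (rule nn_integral_cong) (rule S1)
      also have "\<dots> = (\<integral>\<^sup>+x. \<integral>\<^sup>+z. \<integral>\<^sup>+u. h x u z \<partial>lborel \<partial>lborel \<partial>lborel)"
        by (rule lborel_pair.Fubini'[where f="\<lambda>x z. \<integral>\<^sup>+u. h x u z \<partial>lborel"]) measurable
      also have "\<dots> = (\<integral>\<^sup>+x. \<integral>\<^sup>+u. \<integral>\<^sup>+z. h x u z \<partial>lborel \<partial>lborel \<partial>lborel)"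
      proof (rule nn_integral_cong)
        fix x
        show "(\<integral>\<^sup>+z. \<integral>\<^sup>+u. h x u z \<partial>lborel \<partial>lborel) = (\<integral>\<^sup>+u. \<integral>\<^sup>+z. h x u z \<partial>lborel \<partial>lborel)"
          by (rule lborel_pair.Fubini'[where f="\<lambda>u z. h x u z"]) measurable
      qed
      also have "\<dots> = (\<integral>\<^sup>+x. indicator {a..b} x * (\<integral>\<^sup>+ u. (\<integral>\<^sup>+ z. ennreal (trans_dens pt s x u z) * q z \<partial>lborel)
                  * indicator {s..t} u \<partial>lborel) \<partial>lborel)"
        by (rule nn_integral_cong) (rule S4)
      also have "\<dots> \<le> (\<integral>\<^sup>+x. indicator {a..b} x * C \<partial>lborel)"
        by (intro nn_integral_mono mult_left_mono) (use assms(5) in auto)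
      also have "\<dots> = emeasure lborel {a..b} * C"
      proof -
        have im: "(\<lambda>x. indicator {a..b} x :: ennreal) \<in> borel_measurable lborel" by measurable
        have ab: "{a..b} \<in> sets lborel" by measurable
        show ?thesis using nn_integral_multc[OF im, of C] nn_integral_indicator[OF ab] by simp
      qed
      also have "\<dots> < \<infinity>" using \<open>C < \<infinity>\<close> by (simp add: ennreal_mult_less_top emeasure_lborel_Icc_eq)
      finally show ?thesis .
    qed
    define c1 where "c1 = min c0 1"
    have c1: "0 < c1" "c1 < \<infinity>" using c0pos by (auto simp: c1_def min_less_iff_disj)
    have Km: "(\<lambda>z. q z * indicator K z) \<in> borel_measurable lborel" by measurable
    have "c1 * (\<integral>\<^sup>+ z. q z * indicator K z \<partial>lborel) = (\<integral>\<^sup>+ z. c1 * (q z * indicator K z) \<partial>lborel)"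
      by (rule nn_integral_cmult[OF Km, symmetric])
    also have "\<dots> \<le> (\<integral>\<^sup>+z. q z * F z \<partial>lborel)"
    proof (intro nn_integral_mono)
      fix z
      show "c1 * (q z * indicator K z) \<le> q z * F z"
      proof (cases "z \<in> K")
        case True
        have "c1 \<le> F z" unfolding c1_def by (rule min.coboundedI1[OF Flow[OF True]])
        then show ?thesis using True by (simp add: mult.commute mult_right_mono)
      qed simp
    qed
    also have "\<dots> < \<infinity>" by (rule main)
    finally have "c1 * (\<integral>\<^sup>+ z. q z * indicator K z \<partial>lborel) < \<infinity>" .
    then show "(\<integral>\<^sup>+ z. q z * indicator K z \<partial>lborel) < \<infinity>"
      using c1 by (auto simp: ennreal_mult_less_top top_unique)
  qed
qed

end
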